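(* Let $I,J\ge 2$ and let $m_A=(m_{A,1},\dots,m_{A,I})$, $m_B=(m_{B,1},\dots,m_{B,J})$ be vectors of positive integers with $\sum_i m_{A,i}=\sum_j m_{B,j}=I+J-1$. Then the number of saturated fractions $\mathcal F\subseteq[I]\times[J]$ with margins $m_A$ and $m_B$ is $$\binom{I-1}{m_{B,1}-1,\ \dots,\ m_{B,J}-1}\binom{J-1}{m_{A,1}-1,\ \dots,\ m_{A,I}-1},$$ where $\binom{n}{k_1,\dots,k_r}=\frac{n!}{k_1!\cdots k_r!}$ denotes the multinomial coefficient.
   Context: For a fraction $\mathcal F\subseteq[I]\times[J]$, its margins are $m_{A,i}=\#\{(d_1,d_2)\in\mathcal F: d_1=i\}$ and $m_{B,j}=\#\{(d_1,d_2)\in\mathcal F: d_2=j\}$. For $(i,j)\in[I]\times[J]$ let $r_{(i,j)}\in\mathbb R^{I+J-1}$ be the row vector $(1,a_1,\dots,a_{I-1},b_1,\dots,b_{J-1})$ with $a_s=1$ iff $s=i$ and $b_t=1$ iff $t=j$ (all other entries $0$); $X_{\mathcal F}$ is the matrix with rows $r_{(i,j)}$, $(i,j)\in\mathcal F$. $\mathcal F$ is saturated if $\#\mathcal F=I+J-1$ and $X_{\mathcal F}$ is non-singular. *)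

theory Defs
  imports "Jordan_Normal_Form.Determinant" "HOL-Library.Product_Lexorder"
begin

text \<open>Row vector r_(i,j) in R^(I+J-1), columns indexed 0..I+J-2:
  column 0 is the constant 1, column s (1 <= s <= I-1) is a_s = [s = i],
  column I-1+t (1 <= t <= J-1) is b_t = [t = j].\<close>
definition design_row :: "nat \<Rightarrow> nat \<Rightarrow> nat \<times> nat \<Rightarrow> nat \<Rightarrow> real" where
  "design_row I J d c =
     (if c = 0 then 1
      else if c \<le> I - 1 then (if c = fst d then 1 else 0)
      else if c \<le> I + J - 2 then (if c - (I - 1) = snd d then 1 else 0)
      else 0)"

text \<open>X_F: rows r_(i,j), (i,j) in F, listed in increasing order (row order is
  irrelevant for non-singularity).\<close>
definition design_matrix :: "nat \<Rightarrow> nat \<Rightarrow> (nat \<times> nat) set \<Rightarrow> real mat" where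
  "design_matrix I J F =
     mat (card F) (I + J - 1) (\<lambda>(k, c). design_row I J (sorted_list_of_set F ! k) c)"

definition saturated :: "nat \<Rightarrow> nat \<Rightarrow> (nat \<times> nat) set \<Rightarrow> bool" where
  "saturated I J F \<longleftrightarrow> card F = I + J - 1 \<and> det (design_matrix I J F) \<noteq> 0"

definition margin_A :: "(nat \<times> nat) set \<Rightarrow> nat \<Rightarrow> nat" where
  "margin_A F i = card {d \<in> F. fst d = i}"

definition margin_B :: "(nat \<times> nat) set \<Rightarrow> nat \<Rightarrow> nat" where
  "margin_B F j = card {d \<in> F. snd d = j}"

definition multinomial :: "nat \<Rightarrow> (nat \<Rightarrow> nat) \<Rightarrow> nat set \<Rightarrow> nat" where
  "multinomial n k K = fact n div (\<Prod>x\<in>K. fact (k x))"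

end

theory Submission
  imports Defs
begin


definition indep :: "(nat \<times> nat) set \<Rightarrow> bool" where
  "indep F \<longleftrightarrow> (\<forall>c::nat\<times>nat\<Rightarrow>real.
     (\<forall>a. (\<Sum>d\<in>{d\<in>F. fst d = a}. c d) = 0) \<and> (\<forall>b. (\<Sum>d\<in>{d\<in>F. snd d = b}. c d) = 0)
     \<longrightarrow> (\<forall>d\<in>F. c d = 0))"

lemma indepD:
  fixes c :: "nat\<times>nat\<Rightarrow>real"
  assumes "indep F" "\<And>a. (\<Sum>d\<in>{d\<in>F. fst d = a}. c d) = 0" "\<And>b. (\<Sum>d\<in>{d\<in>F. snd d = b}. c d) = 0" "d \<in> F"
  shows "c d = 0"
proof -
  have "(\<forall>a. (\<Sum>d\<in>{d\<in>F. fst d = a}. c d) = 0) \<and> (\<forall>b. (\<Sum>d\<in>{d\<in>F. snd d = b}. c d) = 0)"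
    using assms(2,3) by blast
  then have "\<forall>d\<in>F. c d = 0" using assms(1) unfolding indep_def by (elim allE impE) 
  then show ?thesis using assms(4) by blast
qed

lemma sum_ins_filter:
  assumes "finite F" "x \<notin> F" "g x = 0"
  shows "(\<Sum>d\<in>{d\<in>insert x F. P d}. g d) = (\<Sum>d\<in>{d\<in>F. P d}. g d)"
proof (cases "P x")
  case True then have "{d\<in>insert x F. P d} = insert x {d\<in>F. P d}" by auto
  then show ?thesis using assms by simp
next
  case False then have "{d\<in>insert x F. P d} = {d\<in>F. P d}" by auto
  then show ?thesis by simp
qed

lemma indep_leaf:
  assumes fin: "finite F" and nin: "\<forall>d\<in>F. snd d \<noteq> b"
  shows "indep (insert (a,b) F) \<longleftrightarrow> indep F"
proof
  assume H: "indep (insert (a,b) F)"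
  show "indep F" unfolding indep_def
  proof (intro allI impI)
    fix c :: "nat\<times>nat\<Rightarrow>real"
    assume E: "(\<forall>x. (\<Sum>d\<in>{d\<in>F. fst d = x}. c d) = 0) \<and> (\<forall>y. (\<Sum>d\<in>{d\<in>F. snd d = y}. c d) = 0)"
    define c' where "c' = c((a,b) := 0)"
    have abF: "(a,b) \<notin> F" using nin by auto
    have eqF: "\<And>P. (\<Sum>d\<in>{d\<in>F. P d}. c' d) = (\<Sum>d\<in>{d\<in>F. P d}. c d)"
      by (rule sum.cong) (use abF in \<open>auto simp: c'_def\<close>)
    have ins: "\<And>P. {d\<in>insert (a,b) F. P d} = (if P (a,b) then insert (a,b) {d\<in>F. P d} else {d\<in>F. P d})"
      by auto
    have c'0: "c' (a,b) = 0" by (simp add: c'_def)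
    have S: "\<And>P. (\<Sum>d\<in>{d\<in>insert (a,b) F. P d}. c' d) = (\<Sum>d\<in>{d\<in>F. P d}. c d)"
      by (simp only: sum_ins_filter[OF fin abF, of c', OF c'0] eqF)
    have "\<forall>d\<in>insert (a,b) F. c' d = 0"
      using indepD[OF H, of c'] E by (simp only: S) blast
    then have Z: "\<forall>d\<in>F. c' d = 0" by blast
    show "\<forall>d\<in>F. c d = 0"
    proof
      fix d assume "d \<in> F"
      then have "d \<noteq> (a,b)" using abF by auto
      then show "c d = 0" using Z[rule_format, OF \<open>d \<in> F\<close>] unfolding c'_def by simp
    qed
  qed
next
  assume H: "indep F"
  show "indep (insert (a,b) F)" unfolding indep_def
  proof (intro allI impI)
    fix c :: "nat\<times>nat\<Rightarrow>real"
    assume E: "(\<forall>x. (\<Sum>d\<in>{d\<in>insert (a,b) F. fst d = x}. c d) = 0) \<and> (\<forall>y. (\<Sum>d\<in>{d\<in>insert (a,b) F. snd d = y}. c d) = 0)"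
    have abF: "(a,b) \<notin> F" using nin by auto
    have "{d\<in>insert (a,b) F. snd d = b} = {(a,b)}" using nin by auto
    moreover have "(\<Sum>d\<in>{d\<in>insert (a,b) F. snd d = b}. c d) = 0" using conjunct2[OF E] by (rule spec)
    ultimately have c0: "c (a,b) = 0" by simp
    have ins: "\<And>P. {d\<in>insert (a,b) F. P d} = (if P (a,b) then insert (a,b) {d\<in>F. P d} else {d\<in>F. P d})"
      by auto
    have S: "\<And>P. (\<Sum>d\<in>{d\<in>insert (a,b) F. P d}. c d) = (\<Sum>d\<in>{d\<in>F. P d}. c d)"
      by (simp only: sum_ins_filter[OF fin abF, of c, OF c0])
    have "\<forall>d\<in>F. c d = 0"
      using indepD[OF H, of c] E by (simp only: S) blast
    then show "\<forall>d\<in>insert (a,b) F. c d = 0" using c0 by auto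
  qed
qed

lemma elim_exists:
  fixes M :: "'e \<Rightarrow> 'x \<Rightarrow> real"
  assumes "finite E" "finite X" "card E < card X"
  shows "\<exists>c. (\<exists>x\<in>X. c x \<noteq> 0) \<and> (\<forall>e\<in>E. (\<Sum>x\<in>X. M e x * c x) = 0)"
  using assms
proof (induction E arbitrary: X M rule: finite_induct)
  case empty
  then obtain x where "x \<in> X" by fastforce
  then show ?case by (intro exI[of _ "\<lambda>_. 1"]) auto
next
  case (insert e E)
  show ?case
  proof (cases "\<forall>x\<in>X. M e x = 0")
    case True
    from insert.IH[of X M] insert.prems insert.hyps obtain c where
      c: "(\<exists>x\<in>X. c x \<noteq> 0)" "(\<forall>e\<in>E. (\<Sum>x\<in>X. M e x * c x) = 0)" by auto
    then show ?thesis using True by (intro exI[of _ c]) auto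
  next
    case False
    then obtain x0 where x0: "x0 \<in> X" "M e x0 \<noteq> 0" by auto
    define M' where "M' = (\<lambda>e' x. M e' x - M e' x0 * M e x / M e x0)"
    have "card (X - {x0}) = card X - 1" using x0 insert.prems by simp
    then have "card E < card (X - {x0})" using insert.prems insert.hyps by simp
    from insert.IH[OF _ this, of M'] insert.prems obtain c' where
      c': "(\<exists>x\<in>X-{x0}. c' x \<noteq> 0)" "(\<forall>e'\<in>E. (\<Sum>x\<in>X-{x0}. M' e' x * c' x) = 0)" by auto
    define s where "s = (\<Sum>x\<in>X-{x0}. M e x * c' x)"
    define c where "c = c'(x0 := - s / M e x0)"
    have split: "\<And>f. (\<Sum>x\<in>X. f x) = f x0 + (\<Sum>x\<in>X-{x0}. f x)"
      using x0 insert.prems by (simp add: sum.remove)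
    have cc: "\<And>f. (\<Sum>x\<in>X-{x0}. f x * c x) = (\<Sum>x\<in>X-{x0}. f x * c' x)"
      by (rule sum.cong) (auto simp: c_def)
    have "(\<Sum>x\<in>X. M e x * c x) = 0"
      using x0 by (simp add: split cc s_def c_def)
    moreover have "(\<Sum>x\<in>X. M e' x * c x) = 0" if "e' \<in> E" for e'
    proof -
      have "(\<Sum>x\<in>X-{x0}. M' e' x * c' x) = (\<Sum>x\<in>X-{x0}. M e' x * c' x - (M e' x0 / M e x0) * (M e x * c' x))"
        by (rule sum.cong) (auto simp: M'_def algebra_simps)
      also have "\<dots> = (\<Sum>x\<in>X-{x0}. M e' x * c' x) - M e' x0 / M e x0 * s"
        by (simp add: sum_subtractf sum_distrib_left s_def)
      finally have "(\<Sum>x\<in>X-{x0}. M' e' x * c' x) = (\<Sum>x\<in>X-{x0}. M e' x * c' x) - M e' x0 / M e x0 * s" .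
      then have "(\<Sum>x\<in>X-{x0}. M e' x * c' x) = M e' x0 / M e x0 * s" using c'(2) that by simp
      then show ?thesis using x0 by (simp add: split cc c_def)
    qed
    moreover have "\<exists>x\<in>X. c x \<noteq> 0" using c'(1) by (auto simp: c_def)
    ultimately show ?thesis by auto
  qed
qed


lemma indep_card_bound:
  assumes fA: "finite A" and fB: "finite B" and "A \<noteq> {}" and "B \<noteq> {}"
    and sub: "F \<subseteq> A \<times> B" and ind: "indep F"
  shows "card F \<le> card A + card B - 1"
proof (rule ccontr)
  assume "\<not> ?thesis"
  then have lt: "card A + card B - 1 < card F" by simp
  obtain b0 where b0: "b0 \<in> B" using assms by auto
  have fF: "finite F" using sub fA fB finite_subset by blast
  define E where "E = Inl ` A \<union> Inr ` (B - {b0})"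
  define M :: "nat + nat \<Rightarrow> nat \<times> nat \<Rightarrow> real" where
    "M = (\<lambda>e d. case e of Inl a \<Rightarrow> (if fst d = a then 1 else 0) | Inr b \<Rightarrow> (if snd d = b then 1 else 0))"
  have "card E \<le> card (Inl ` A :: (nat+nat) set) + card (Inr ` (B - {b0}) :: (nat+nat) set)"
    unfolding E_def by (rule card_Un_le)
  also have "\<dots> \<le> card A + card (B - {b0})"
    by (intro add_mono card_image_le) (use fA fB in auto)
  also have "\<dots> = card A + card B - 1" using b0 fB \<open>B \<noteq> {}\<close>
  proof -
    have "card B \<ge> 1" using fB \<open>B \<noteq> {}\<close> by (simp add: Suc_leI card_gt_0_iff)
    then show ?thesis using b0 fB by simp
  qed
  finally have "card E < card F" using lt by simp
  moreover have "finite E" unfolding E_def using fA fB by simp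
  ultimately obtain c where c: "\<exists>x\<in>F. c x \<noteq> 0" "\<forall>e\<in>E. (\<Sum>x\<in>F. M e x * c x) = 0"
    using elim_exists[of E F M] fF by blast
  have fil: "\<And>P. (\<Sum>d\<in>{d\<in>F. P d}. c d) = (\<Sum>d\<in>F. (if P d then 1 else 0) * c d)"
    unfolding sum.inter_filter[OF fF] by (rule sum.cong) auto
  have eqA: "(\<Sum>d\<in>{d\<in>F. fst d = a}. c d) = 0" for a
  proof (cases "a \<in> A")
    case True
    then have "Inl a \<in> E" unfolding E_def by auto
    then show ?thesis using c(2)[rule_format, of "Inl a"] by (simp add: fil M_def)
  next
    case False
    then have "{d\<in>F. fst d = a} = {}" using sub by auto
    then show ?thesis by (metis sum.empty)
  qed
  have tot: "(\<Sum>d\<in>F. c d) = 0"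
  proof -
    have "fst ` F \<subseteq> A" using sub by auto
    from sum.group[OF fF fA this, of c] show ?thesis using eqA by simp
  qed
  have eqB': "(\<Sum>d\<in>{d\<in>F. snd d = b}. c d) = 0" if "b \<noteq> b0" for b
  proof (cases "b \<in> B")
    case True
    then have "Inr b \<in> E" unfolding E_def using that by auto
    then show ?thesis using c(2)[rule_format, of "Inr b"] by (simp add: fil M_def)
  next
    case False
    then have "{d\<in>F. snd d = b} = {}" using sub by auto
    then show ?thesis by (metis sum.empty)
  qed
  have "(\<Sum>d\<in>F. c d) = (\<Sum>b\<in>B. (\<Sum>d\<in>{d\<in>F. snd d = b}. c d))"
  proof -
    have "snd ` F \<subseteq> B" using sub by auto
    from sum.group[OF fF fB this, of c] show ?thesis by simp
  qed
  also have "\<dots> = (\<Sum>d\<in>{d\<in>F. snd d = b0}. c d) + (\<Sum>b\<in>B-{b0}. (\<Sum>d\<in>{d\<in>F. snd d = b}. c d))"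
    using b0 fB by (simp add: sum.remove)
  also have "(\<Sum>b\<in>B-{b0}. (\<Sum>d\<in>{d\<in>F. snd d = b}. c d)) = 0"
    using eqB' by simp
  finally have "(\<Sum>d\<in>{d\<in>F. snd d = b0}. c d) = 0" using tot by simp
  then have eqB: "(\<Sum>d\<in>{d\<in>F. snd d = b}. c d) = 0" for b
    using eqB' by (cases "b = b0") auto
  have "\<forall>x\<in>F. c x = 0" using indepD[OF ind eqA eqB] by blast
  then show False using c(1) by blast
qed



definition SS :: "nat set \<Rightarrow> nat set \<Rightarrow> (nat\<Rightarrow>nat) \<Rightarrow> (nat\<Rightarrow>nat) \<Rightarrow> (nat\<times>nat) set set" where
  "SS A B dA dB = {F. F \<subseteq> A \<times> B \<and> indep F \<and> (\<forall>a\<in>A. margin_A F a = dA a) \<and> (\<forall>b\<in>B. margin_B F b = dB b)}"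

lemma filter_swap: "{d \<in> prod.swap ` F. P d} = prod.swap ` {d\<in>F. P (prod.swap d)}"
  by auto

lemma margin_A_swap: "margin_A (prod.swap ` F) x = margin_B F x"
  unfolding margin_A_def margin_B_def filter_swap
  by (subst card_image) (auto intro: inj_on_subset[OF swap_inj_on])

lemma margin_B_swap: "margin_B (prod.swap ` F) x = margin_A F x"
  unfolding margin_A_def margin_B_def filter_swap
  by (subst card_image) (auto intro: inj_on_subset[OF swap_inj_on])

lemma indep_swap:
  assumes "indep F" shows "indep (prod.swap ` F)"
  unfolding indep_def
proof (intro allI impI ballI)
  fix c :: "nat\<times>nat\<Rightarrow>real" and d
  assume E: "(\<forall>a. (\<Sum>d\<in>{d\<in>prod.swap ` F. fst d = a}. c d) = 0) \<and> (\<forall>b. (\<Sum>d\<in>{d\<in>prod.swap ` F. snd d = b}. c d) = 0)"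
    and d: "d \<in> prod.swap ` F"
  have R: "\<And>P. (\<Sum>e\<in>{e\<in>prod.swap ` F. P e}. c e) = (\<Sum>e\<in>{e\<in>F. P (prod.swap e)}. c (prod.swap e))"
    unfolding filter_swap by (subst sum.reindex) (auto intro: inj_on_subset[OF swap_inj_on])
  have "(c \<circ> prod.swap) (prod.swap d) = 0"
  proof (rule indepD[OF assms])
    fix a show "(\<Sum>e\<in>{e\<in>F. fst e = a}. (c \<circ> prod.swap) e) = 0"
      using conjunct2[OF E, rule_format, of a] unfolding R by simp
  next
    fix b show "(\<Sum>e\<in>{e\<in>F. snd e = b}. (c \<circ> prod.swap) e) = 0"
      using conjunct1[OF E, rule_format, of b] unfolding R by simp
  next
    show "prod.swap d \<in> F" using d by auto
  qed
  then show "c d = 0" by simp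
qed

lemma SS_swap_mem: "F \<in> SS A B dA dB \<Longrightarrow> prod.swap ` F \<in> SS B A dB dA"
  unfolding SS_def by (auto simp: margin_A_swap margin_B_swap indep_swap)

lemma SS_finite: "finite A \<Longrightarrow> finite B \<Longrightarrow> finite (SS A B dA dB)"
  unfolding SS_def by (rule finite_subset[of _ "Pow (A \<times> B)"]) auto

lemma card_SS_swap:
  assumes "finite A" "finite B"
  shows "card (SS B A dB dA) = card (SS A B dA dB)"
proof -
  have inj: "inj_on (\<lambda>F. prod.swap ` F) X" for X :: "(nat\<times>nat) set set"
  proof (rule inj_onI)
    fix F1 F2 :: "(nat\<times>nat) set" assume "prod.swap ` F1 = prod.swap ` F2"
    then have "prod.swap ` prod.swap ` F1 = prod.swap ` prod.swap ` F2" by simp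
    then show "F1 = F2" by (simp add: image_image)
  qed
  have "card (SS A B dA dB) \<le> card (SS B A dB dA)"
    by (rule card_inj_on_le[OF inj]) (auto simp: SS_swap_mem SS_finite assms)
  moreover have "card (SS B A dB dA) \<le> card (SS A B dA dB)"
    by (rule card_inj_on_le[OF inj]) (auto simp: SS_swap_mem SS_finite assms)
  ultimately show ?thesis by simp
qed

definition hyps :: "nat set \<Rightarrow> nat set \<Rightarrow> (nat\<Rightarrow>nat) \<Rightarrow> (nat\<Rightarrow>nat) \<Rightarrow> bool" where
  "hyps A B dA dB \<longleftrightarrow> finite A \<and> finite B \<and> A \<noteq> {} \<and> B \<noteq> {} \<and> (\<forall>a\<in>A. 0 < dA a) \<and> (\<forall>b\<in>B. 0 < dB b)
     \<and> sum dA A = card A + card B - 1 \<and> sum dB B = card A + card B - 1"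

definition concl :: "nat set \<Rightarrow> nat set \<Rightarrow> (nat\<Rightarrow>nat) \<Rightarrow> (nat\<Rightarrow>nat) \<Rightarrow> bool" where
  "concl A B dA dB \<longleftrightarrow> card (SS A B dA dB) * (\<Prod>a\<in>A. fact (dA a - 1)) * (\<Prod>b\<in>B. fact (dB b - 1))
     = (fact (card A - 1) * fact (card B - 1) :: nat)"

lemma hyps_swap: "hyps A B dA dB \<Longrightarrow> hyps B A dB dA"
  unfolding hyps_def by (auto simp: add.commute)

lemma concl_swap: "finite A \<Longrightarrow> finite B \<Longrightarrow> concl A B dA dB \<Longrightarrow> concl B A dB dA"
  unfolding concl_def by (simp add: card_SS_swap mult_ac)

lemma sum_minus_one:
  fixes d :: "nat \<Rightarrow> nat"
  assumes "finite A" "\<forall>a\<in>A. 0 < d a"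
  shows "(\<Sum>a\<in>A. d a - 1) = sum d A - card A"
proof -
  have "sum d A = (\<Sum>a\<in>A. (d a - 1) + 1)" using assms(2) by (intro sum.cong) auto
  also have "\<dots> = (\<Sum>a\<in>A. d a - 1) + (\<Sum>a\<in>A. 1)" by (rule sum.distrib)
  also have "\<dots> = (\<Sum>a\<in>A. d a - 1) + card A" by simp
  finally show ?thesis by simp
qed

lemma card_by_margin_B:
  assumes "F \<subseteq> A \<times> B" "finite A" "finite B"
  shows "card F = (\<Sum>b\<in>B. margin_B F b)"
proof -
  have fF: "finite F" using assms finite_subset by blast
  have "snd ` F \<subseteq> B" using assms by auto
  from sum.group[OF fF assms(3) this, of "\<lambda>_. 1::nat"] show ?thesis
    unfolding margin_B_def by simp
qed

lemma card_by_margin_A: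
  assumes "F \<subseteq> A \<times> B" "finite A" "finite B"
  shows "card F = (\<Sum>a\<in>A. margin_A F a)"
proof -
  have fF: "finite F" using assms finite_subset by blast
  have "fst ` F \<subseteq> A" using assms by auto
  from sum.group[OF fF assms(2) this, of "\<lambda>_. 1::nat"] show ?thesis
    unfolding margin_A_def by simp
qed

lemma count_base:
  assumes h: "hyps A B dA dB" and cA: "card A = 1"
  shows "concl A B dA dB"
proof -
  obtain a where A: "A = {a}" using cA card_1_singletonE by blast
  from h have fB: "finite B" and pos: "\<forall>b\<in>B. 0 < dB b" and sB: "sum dB B = card B"
    and sA: "dA a = card B" using A unfolding hyps_def by auto
  have "(\<Sum>b\<in>B. dB b - 1) = 0" using sum_minus_one[OF fB pos] sB by simp
  then have z: "\<forall>b\<in>B. dB b - 1 = 0" using fB by simp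
  have d1: "\<forall>b\<in>B. dB b = 1"
  proof
    fix b assume "b \<in> B"
    then have "dB b - 1 = 0" "0 < dB b" using z pos by auto
    then show "dB b = 1" by simp
  qed
  have "SS A B dA dB = {A \<times> B}"
  proof (intro equalityI subsetI)
    fix F assume "F \<in> SS A B dA dB"
    then have sub: "F \<subseteq> A \<times> B" and m: "\<forall>b\<in>B. margin_B F b = 1" using d1 unfolding SS_def by auto
    have "A \<times> B \<subseteq> F"
    proof
      fix x assume x: "x \<in> A \<times> B"
      then obtain b where xb: "x = (a,b)" "b \<in> B" using A by auto
      then have "card {d\<in>F. snd d = b} = 1" using m unfolding margin_B_def by auto
      then obtain e where "{d\<in>F. snd d = b} = {e}" by (rule card_1_singletonE)
      then have e: "e \<in> F" "snd e = b" by blast+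
      then have "fst e = a" using sub A by auto
      then have "e = x" using e xb by (cases e) simp
      then show "x \<in> F" using e by simp
    qed
    then show "F \<in> {A \<times> B}" using sub by auto
  next
    fix F assume "F \<in> {A \<times> B}"
    then have F: "F = A \<times> B" by simp
    have ind: "indep F"
      unfolding indep_def
    proof (intro allI impI ballI)
      fix c :: "nat\<times>nat\<Rightarrow>real" and x
      assume E: "(\<forall>a. (\<Sum>d\<in>{d\<in>F. fst d = a}. c d) = 0) \<and> (\<forall>b. (\<Sum>d\<in>{d\<in>F. snd d = b}. c d) = 0)"
        and x: "x \<in> F"
      then obtain b where xb: "x = (a,b)" using A F by auto
      have "{d\<in>F. snd d = b} = {x}" using F A xb x by auto
      then show "c x = 0" using conjunct2[OF E, rule_format, of b] by simp
    qed
    have mA: "margin_A F a = card B"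
    proof -
      have "{d\<in>F. fst d = a} = A \<times> B" using F A by auto
      then show ?thesis unfolding margin_A_def using A by (simp add: card_cartesian_product)
    qed
    have mB: "margin_B F b = 1" if "b \<in> B" for b
    proof -
      have "{d\<in>F. snd d = b} = {(a,b)}" using F A that by auto
      then show ?thesis unfolding margin_B_def by simp
    qed
    show "F \<in> SS A B dA dB" unfolding SS_def using ind mA mB F A sA d1 by auto
  qed
  then have "card (SS A B dA dB) = 1" by simp
  moreover have "(\<Prod>b\<in>B. fact (dB b - 1)) = (1::nat)" using d1 by simp
  ultimately show ?thesis unfolding concl_def using A sA cA by simp
qed



lemma margin_A_insert:
  assumes "finite F" "(a,b) \<notin> F"
  shows "margin_A (insert (a,b) F) x = (if x = a then Suc (margin_A F x) else margin_A F x)"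
proof (cases "x = a")
  case True
  then have "{d\<in>insert (a,b) F. fst d = x} = insert (a,b) {d\<in>F. fst d = x}" by auto
  then show ?thesis using True assms unfolding margin_A_def by simp
next
  case False
  then have "{d\<in>insert (a,b) F. fst d = x} = {d\<in>F. fst d = x}" by auto
  then show ?thesis using False unfolding margin_A_def by simp
qed

lemma margin_B_insert:
  assumes "finite F" "(a,b) \<notin> F"
  shows "margin_B (insert (a,b) F) y = (if y = b then Suc (margin_B F y) else margin_B F y)"
proof (cases "y = b")
  case True
  then have "{d\<in>insert (a,b) F. snd d = y} = insert (a,b) {d\<in>F. snd d = y}" by auto
  then show ?thesis using True assms unfolding margin_B_def by simp
next
  case False
  then have "{d\<in>insert (a,b) F. snd d = y} = {d\<in>F. snd d = y}" by auto
  then show ?thesis using False unfolding margin_B_def by simp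
qed

lemma count_step:
  assumes h: "hyps A B dA dB" and cA: "card A \<ge> 2" and cB: "card B \<ge> 2" and b: "b \<in> B" and db: "dB b = 1"
    and IH: "\<And>A' B' dA' dB'. card A' + card B' < card A + card B \<Longrightarrow> hyps A' B' dA' dB' \<Longrightarrow> concl A' B' dA' dB'"
  shows "concl A B dA dB"
proof -
  from h have fA: "finite A" and fB: "finite B" and pA: "\<forall>a\<in>A. 0 < dA a" and pB: "\<forall>b\<in>B. 0 < dB b"
    and sA: "sum dA A = card A + card B - 1" and sB: "sum dB B = card A + card B - 1"
    unfolding hyps_def by auto
  define B' where "B' = B - {b}"
  define T where "T a = SS A B' (dA(a := dA a - 1)) dB" for a
  have fB': "finite B'" using fB B'_def by simp
  have cB': "card B' = card B - 1" using fB b B'_def by simp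
  have Tsub: "F' \<subseteq> A \<times> B'" if "F' \<in> T a" for F' a using that unfolding T_def SS_def by auto
  have Tnb: "\<forall>d\<in>F'. snd d \<noteq> b" if "F' \<in> T a" for F' a using Tsub[OF that] B'_def by auto
  have Tfin: "finite F'" if "F' \<in> T a" for F' a
    using Tsub[OF that] fA fB' finite_subset by blast
  have eqS: "SS A B dA dB = (\<Union>a\<in>A. insert (a,b) ` T a)"
  proof (intro equalityI subsetI)
    fix F assume F: "F \<in> SS A B dA dB"
    from F have sub: "F \<subseteq> A \<times> B" and ind: "indep F" and mA: "\<forall>x\<in>A. margin_A F x = dA x"
      and mB: "\<forall>y\<in>B. margin_B F y = dB y" unfolding SS_def by auto
    have fF: "finite F" using sub fA fB finite_subset by blast
    have "card {d\<in>F. snd d = b} = 1" using mB b db unfolding margin_B_def by auto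
    then obtain e where e: "{d\<in>F. snd d = b} = {e}" by (rule card_1_singletonE)
    then have eF: "e \<in> F" "snd e = b" by blast+
    define a where "a = fst e"
    have ea: "e = (a,b)" using eF a_def by (cases e) simp
    have aA: "a \<in> A" using eF sub a_def by auto
    define F' where "F' = F - {(a,b)}"
    have nb: "\<forall>d\<in>F'. snd d \<noteq> b"
    proof
      fix d assume d: "d \<in> F'"
      show "snd d \<noteq> b"
      proof
        assume "snd d = b"
        then have "d \<in> {e}" using e d F'_def by blast
        then show False using d ea F'_def by simp
      qed
    qed
    have Fi: "F = insert (a,b) F'" using eF ea F'_def by auto
    have fF': "finite F'" using fF F'_def by simp
    have abF': "(a,b) \<notin> F'" using F'_def by simp
    have "F' \<in> T a" unfolding T_def SS_def
    proof (intro CollectI conjI ballI)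
      show "F' \<subseteq> A \<times> B'"
      proof
        fix d assume d: "d \<in> F'"
        then have "d \<in> A \<times> B" "snd d \<noteq> b" using sub nb F'_def by auto
        then show "d \<in> A \<times> B'" using B'_def by (cases d) auto
      qed
      show "indep F'" using indep_leaf[OF fF' nb, of a] ind Fi by simp
    next
      fix x assume x: "x \<in> A"
      have "margin_A F x = (if x = a then Suc (margin_A F' x) else margin_A F' x)"
        using margin_A_insert[OF fF' abF'] Fi by simp
      then show "margin_A F' x = (dA(a := dA a - 1)) x" using mA x by (auto split: if_splits)
    next
      fix y assume y: "y \<in> B'"
      have "margin_B F y = margin_B F' y"
        using margin_B_insert[OF fF' abF'] Fi y B'_def by simp
      then show "margin_B F' y = dB y" using mB y B'_def by simp
    qed
    then show "F \<in> (\<Union>a\<in>A. insert (a,b) ` T a)" using Fi aA by blast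
  next
    fix F assume "F \<in> (\<Union>a\<in>A. insert (a,b) ` T a)"
    then obtain a F' where aA: "a \<in> A" and FT: "F' \<in> T a" and Fi: "F = insert (a,b) F'" by blast
    have nb: "\<forall>d\<in>F'. snd d \<noteq> b" using Tnb[OF FT] .
    have fF': "finite F'" using Tfin[OF FT] .
    have abF': "(a,b) \<notin> F'" using nb by auto
    from FT have sub: "F' \<subseteq> A \<times> B'" and ind: "indep F'"
      and mA: "\<forall>x\<in>A. margin_A F' x = (dA(a := dA a - 1)) x"
      and mB: "\<forall>y\<in>B'. margin_B F' y = dB y" unfolding T_def SS_def by auto
    show "F \<in> SS A B dA dB" unfolding SS_def
    proof (intro CollectI conjI ballI)
      show "F \<subseteq> A \<times> B" using sub aA b Fi B'_def by auto
      show "indep F" using indep_leaf[OF fF' nb, of a] ind Fi by simp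
    next
      fix x assume x: "x \<in> A"
      show "margin_A F x = dA x"
        using margin_A_insert[OF fF' abF', of x] Fi mA x pA by auto
    next
      fix y assume y: "y \<in> B"
      show "margin_B F y = dB y"
      proof (cases "y = b")
        case True
        have "{d\<in>F'. snd d = b} = {}" using nb by auto
        then have "margin_B F' b = 0" unfolding margin_B_def by (metis card.empty)
        then show ?thesis using margin_B_insert[OF fF' abF', of y] Fi True db by simp
      next
        case False
        then show ?thesis using margin_B_insert[OF fF' abF', of y] Fi mB y B'_def by simp
      qed
    qed
  qed
  have Tfinite: "finite (T a)" for a unfolding T_def using SS_finite fA fB' by blast
  have cardS: "card (SS A B dA dB) = (\<Sum>a\<in>A. card (T a))"
  proof -
    have "card (SS A B dA dB) = (\<Sum>a\<in>A. card (insert (a,b) ` T a))"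
      unfolding eqS
    proof (rule card_UN_disjoint)
      show "finite A" by (rule fA)
      show "\<forall>a\<in>A. finite (insert (a, b) ` T a)" using Tfinite by simp
      show "\<forall>a1\<in>A. \<forall>a2\<in>A. a1 \<noteq> a2 \<longrightarrow> insert (a1, b) ` T a1 \<inter> insert (a2, b) ` T a2 = {}"
      proof (intro ballI impI)
        fix a1 a2 :: nat assume "a1 \<noteq> a2"
        show "insert (a1, b) ` T a1 \<inter> insert (a2, b) ` T a2 = {}"
        proof (rule ccontr)
          assume "\<not> ?thesis"
          then obtain F1 F2 where F1: "F1 \<in> T a1" and F2: "F2 \<in> T a2" and eq: "insert (a1,b) F1 = insert (a2,b) F2"
            by blast
          have "(a1,b) \<in> insert (a2,b) F2" using eq by blast
          then show False using Tnb[OF F2] \<open>a1 \<noteq> a2\<close> by auto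
        qed
      qed
    qed
    also have "\<dots> = (\<Sum>a\<in>A. card (T a))"
    proof (rule sum.cong)
      fix a assume "a \<in> A"
      have "inj_on (insert (a,b)) (T a)"
      proof (rule inj_onI)
        fix F1 F2 assume F1: "F1 \<in> T a" and F2: "F2 \<in> T a" and eq: "insert (a,b) F1 = insert (a,b) F2"
        have "(a,b) \<notin> F1" "(a,b) \<notin> F2" using Tnb[OF F1] Tnb[OF F2] by auto
        then show "F1 = F2" using eq by (metis insert_ident)
      qed
      then show "card (insert (a,b) ` T a) = card (T a)" by (rule card_image)
    qed simp
    finally show ?thesis .
  qed
  define P where "P = (\<Prod>a\<in>A. fact (dA a - 1) :: nat)"
  define Q where "Q = (\<Prod>y\<in>B. fact (dB y - 1) :: nat)"
  have Qeq: "Q = (\<Prod>y\<in>B'. fact (dB y - 1))"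
    unfolding Q_def B'_def using prod.remove[OF fB b, of "\<lambda>y. fact (dB y - 1) :: nat"] db by simp
  have sB': "sum dB B' = card A + card B - 2"
    using sum.remove[OF fB b, of dB] db sB B'_def by simp
  have key: "card (T a) * P * Q = (dA a - 1) * (fact (card A - 1) * fact (card B - 2))" if aA: "a \<in> A" for a
  proof (cases "dA a = 1")
    case True
    have "T a = {}"
    proof (rule ccontr)
      assume "T a \<noteq> {}"
      then obtain F' where FT: "F' \<in> T a" by blast
      from FT have sub: "F' \<subseteq> A \<times> B'" and ind: "indep F'"
        and mA: "\<forall>x\<in>A. margin_A F' x = (dA(a := dA a - 1)) x"
        and mB: "\<forall>y\<in>B'. margin_B F' y = dB y" unfolding T_def SS_def by auto
      have fF': "finite F'" using Tfin[OF FT] .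
      have "card {d\<in>F'. fst d = a} = 0" using mA aA True unfolding margin_A_def by simp
      then have "{d\<in>F'. fst d = a} = {}" using fF' by simp
      then have sub2: "F' \<subseteq> (A - {a}) \<times> B'" using sub by auto
      have "card F' = (\<Sum>y\<in>B'. margin_B F' y)" by (rule card_by_margin_B[OF sub fA fB'])
      also have "\<dots> = sum dB B'" using mB by simp
      finally have c1: "card F' = card A + card B - 2" using sB' by simp
      have cAa: "card (A - {a}) = card A - 1" using fA aA by simp
      have "card (A - {a}) \<ge> 1" using cAa cA by simp
      then have "A - {a} \<noteq> {}" by (intro notI) simp
      have "card B' \<ge> 1" using cB' cB by simp
      then have "B' \<noteq> {}" by (intro notI) simp
      note ne = \<open>A - {a} \<noteq> {}\<close> \<open>B' \<noteq> {}\<close>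
      have "card F' \<le> card (A - {a}) + card B' - 1"
        using indep_card_bound[OF _ fB' ne sub2 ind] fA by simp
      then show False using c1 cAa cB' cA cB by simp
    qed
    then show ?thesis using True by simp
  next
    case False
    have "0 < dA a" using pA aA by blast
    then have da2: "dA a \<ge> 2" using False by linarith
    define dA' where "dA' = dA(a := dA a - 1)"
    have sA': "sum dA' A = card A + card B' - 1"
    proof -
      have "sum dA' A = dA' a + sum dA' (A - {a})" using sum.remove[OF fA aA] .
      also have "sum dA' (A - {a}) = sum dA (A - {a})" unfolding dA'_def by (rule sum.cong) auto
      finally have "sum dA' A = (dA a - 1) + sum dA (A - {a})" unfolding dA'_def by simp
      moreover have "sum dA A = dA a + sum dA (A - {a})" using sum.remove[OF fA aA] .
      ultimately show ?thesis using sA cB' cB da2 by simp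
    qed
    have "card B' \<ge> 1" using cB' cB by simp
    then have neB': "B' \<noteq> {}" by (intro notI) simp
    have hyp: "hyps A B' dA' dB"
      unfolding hyps_def
    proof (intro conjI)
      show "finite A" "finite B'" "B' \<noteq> {}" using fA fB' neB' by auto
      show "A \<noteq> {}" using aA by auto
      show "\<forall>x\<in>A. 0 < dA' x" using pA da2 unfolding dA'_def by auto
      show "\<forall>y\<in>B'. 0 < dB y" using pB B'_def by auto
      show "sum dA' A = card A + card B' - 1" by (rule sA')
      show "sum dB B' = card A + card B' - 1" using sB' cB' cB by simp
    qed
    have lt: "card A + card B' < card A + card B" using cB' cB by simp
    have C: "concl A B' dA' dB" by (rule IH[OF lt hyp])
    define P' where "P' = (\<Prod>x\<in>A. fact (dA' x - 1) :: nat)"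
    have PP: "P = (dA a - 1) * P'"
    proof -
      have "P = fact (dA a - 1) * (\<Prod>x\<in>A-{a}. fact (dA x - 1))"
        unfolding P_def using prod.remove[OF fA aA] .
      moreover have "P' = fact (dA a - 1 - 1) * (\<Prod>x\<in>A-{a}. fact (dA x - 1))"
      proof -
        have "P' = fact (dA' a - 1) * (\<Prod>x\<in>A-{a}. fact (dA' x - 1))"
          unfolding P'_def using prod.remove[OF fA aA] .
        moreover have "(\<Prod>x\<in>A-{a}. fact (dA' x - 1)) = (\<Prod>x\<in>A-{a}. fact (dA x - 1) :: nat)"
          unfolding dA'_def by (rule prod.cong) auto
        ultimately show ?thesis unfolding dA'_def by simp
      qed
      moreover have "fact (dA a - 1) = (dA a - 1) * (fact (dA a - 1 - 1) :: nat)"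
        using fact_reduce[where 'a=nat, of "dA a - 1"] da2 by simp
      ultimately show ?thesis by simp
    qed
    have "card (T a) * P' * Q = fact (card A - 1) * fact (card B' - 1)"
      using C unfolding concl_def T_def P'_def Qeq dA'_def .
    then show ?thesis using PP cB' by (simp add: mult_ac numeral_2_eq_2)
  qed
  have "card (SS A B dA dB) * P * Q = (\<Sum>a\<in>A. card (T a) * P * Q)"
    unfolding cardS by (simp add: sum_distrib_right)
  also have "\<dots> = (\<Sum>a\<in>A. (dA a - 1) * (fact (card A - 1) * fact (card B - 2)))"
    using key by simp
  also have "\<dots> = (\<Sum>a\<in>A. dA a - 1) * (fact (card A - 1) * fact (card B - 2))"
    by (simp add: sum_distrib_right)
  also have "(\<Sum>a\<in>A. dA a - 1) = card B - 1"
    using sum_minus_one[OF fA pA] sA by simp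
  also have "(card B - 1) * (fact (card A - 1) * fact (card B - 2)) = fact (card A - 1) * (fact (card B - 1) :: nat)"
  proof -
    have "fact (card B - 1) = (card B - 1) * (fact (card B - 1 - 1) :: nat)"
      using fact_reduce[where 'a=nat, of "card B - 1"] cB by simp
    then show ?thesis by (simp add: mult_ac numeral_2_eq_2)
  qed
  finally show ?thesis unfolding concl_def P_def Q_def .
qed



lemma count_main: "hyps A B dA dB \<Longrightarrow> concl A B dA dB"
proof (induction "card A + card B" arbitrary: A B dA dB rule: less_induct)
  case less
  from less.prems have fA: "finite A" and fB: "finite B" and neA: "A \<noteq> {}" and neB: "B \<noteq> {}"
    and pA: "\<forall>a\<in>A. 0 < dA a" and pB: "\<forall>b\<in>B. 0 < dB b"
    and sA: "sum dA A = card A + card B - 1" and sB: "sum dB B = card A + card B - 1"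
    unfolding hyps_def by auto
  have cA1: "card A \<ge> 1" using fA neA by (simp add: Suc_leI card_gt_0_iff)
  have cB1: "card B \<ge> 1" using fB neB by (simp add: Suc_leI card_gt_0_iff)
  show ?case
  proof (cases "card A = 1")
    case True then show ?thesis using count_base less.prems by blast
  next
    case F1: False
    show ?thesis
    proof (cases "card B = 1")
      case True
      have "concl B A dB dA" using count_base[OF hyps_swap[OF less.prems] True] .
      then show ?thesis using concl_swap[OF fB fA] by blast
    next
      case F2: False
      have cA2: "card A \<ge> 2" and cB2: "card B \<ge> 2" using F1 F2 cA1 cB1 by auto
      have "(\<exists>b\<in>B. dB b = 1) \<or> (\<exists>a\<in>A. dA a = 1)"
      proof (rule ccontr)
        assume "\<not> ?thesis"
        then have gB: "\<forall>b\<in>B. 2 \<le> dB b" and gA: "\<forall>a\<in>A. 2 \<le> dA a" using pA pB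
          by (metis One_nat_def Suc_1 Suc_leI le_neq_implies_less)+
        have "(\<Sum>b\<in>B. 2) \<le> sum dB B" using gB by (intro sum_mono) auto
        then have "2 * card B \<le> sum dB B" by simp
        moreover have "(\<Sum>a\<in>A. 2) \<le> sum dA A" using gA by (intro sum_mono) auto
        then have "2 * card A \<le> sum dA A" by simp
        ultimately show False using sA sB cA1 by linarith
      qed
      then show ?thesis
      proof
        assume "\<exists>b\<in>B. dB b = 1"
        then obtain b where b: "b \<in> B" "dB b = 1" by blast
        show ?thesis by (rule count_step[OF less.prems cA2 cB2 b]) (rule less.hyps)
      next
        assume "\<exists>a\<in>A. dA a = 1"
        then obtain a where a: "a \<in> A" "dA a = 1" by blast
        have "concl B A dB dA"
        proof (rule count_step[OF hyps_swap[OF less.prems] cB2 cA2 a])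
          fix A' B' dA' dB'
          assume "card A' + card B' < card B + card A" "hyps A' B' dA' dB'"
          then show "concl A' B' dA' dB'" using less.hyps by (simp add: add.commute)
        qed
        then show ?thesis using concl_swap[OF fB fA] by blast
      qed
    qed
  qed
qed

lemma prod_fact_dvd:
  fixes k :: "'x \<Rightarrow> nat"
  assumes "finite K"
  shows "(\<Prod>x\<in>K. fact (k x) :: nat) dvd fact (sum k K)"
  using assms
proof (induction K rule: finite_induct)
  case empty then show ?case by simp
next
  case (insert x K)
  have "fact (k x + sum k K) = fact (k x) * fact (sum k K) * ((k x + sum k K) choose k x)"
    using binomial_fact_lemma[of "k x" "k x + sum k K"] by simp
  then show ?case using insert
    by (simp add: mult_dvd_mono)
qed



lemma sum_filter_ind:
  fixes c :: "'x \<Rightarrow> real"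
  assumes "finite F"
  shows "(\<Sum>d\<in>F. (if P d then 1 else 0) * c d) = (\<Sum>d\<in>{d\<in>F. P d}. c d)"
  unfolding sum.inter_filter[OF assms] by (rule sum.cong) auto

lemma rs0: "(\<Sum>d\<in>F. design_row I J d 0 * c d) = (\<Sum>d\<in>F. c d)"
  by (simp add: design_row_def)

lemma rsA:
  fixes c :: "nat\<times>nat \<Rightarrow> real"
  assumes "finite F" "1 \<le> cl" "cl \<le> I - 1"
  shows "(\<Sum>d\<in>F. design_row I J d cl * c d) = (\<Sum>d\<in>{d\<in>F. fst d = cl}. c d)"
proof -
  have "(\<Sum>d\<in>F. design_row I J d cl * c d) = (\<Sum>d\<in>F. (if fst d = cl then 1 else 0) * c d)"
    by (rule sum.cong) (use assms in \<open>auto simp: design_row_def\<close>)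
  then show ?thesis using sum_filter_ind[OF assms(1)] by simp
qed

lemma rsB:
  fixes c :: "nat\<times>nat \<Rightarrow> real"
  assumes "finite F" "I - 1 < cl" "cl \<le> I + J - 2"
  shows "(\<Sum>d\<in>F. design_row I J d cl * c d) = (\<Sum>d\<in>{d\<in>F. snd d = cl - (I - 1)}. c d)"
proof -
  have "(\<Sum>d\<in>F. design_row I J d cl * c d) = (\<Sum>d\<in>F. (if snd d = cl - (I - 1) then 1 else 0) * c d)"
    by (rule sum.cong) (use assms in \<open>auto simp: design_row_def\<close>)
  then show ?thesis using sum_filter_ind[OF assms(1)] by simp
qed

lemma design_eqs:
  fixes c :: "nat\<times>nat \<Rightarrow> real"
  assumes sub: "F \<subseteq> {1..I} \<times> {1..J}" and I: "I \<ge> 1" and J: "J \<ge> 1"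
  shows "(\<forall>cl < I + J - 1. (\<Sum>d\<in>F. design_row I J d cl * c d) = 0) \<longleftrightarrow>
         ((\<forall>a. (\<Sum>d\<in>{d\<in>F. fst d = a}. c d) = 0) \<and> (\<forall>b. (\<Sum>d\<in>{d\<in>F. snd d = b}. c d) = 0))"
proof -
  have fF: "finite F" using sub finite_subset by blast
  have totA: "(\<Sum>d\<in>F. c d) = (\<Sum>a\<in>{1..I}. (\<Sum>d\<in>{d\<in>F. fst d = a}. c d))"
  proof -
    have "fst ` F \<subseteq> {1..I}" using sub by auto
    from sum.group[OF fF _ this, of c] show ?thesis by simp
  qed
  have totB: "(\<Sum>d\<in>F. c d) = (\<Sum>b\<in>{1..J}. (\<Sum>d\<in>{d\<in>F. snd d = b}. c d))"
  proof -
    have "snd ` F \<subseteq> {1..J}" using sub by auto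
    from sum.group[OF fF _ this, of c] show ?thesis by simp
  qed
  have outA: "(\<Sum>d\<in>{d\<in>F. fst d = a}. c d) = 0" if "a \<notin> {1..I}" for a
  proof -
    have "{d\<in>F. fst d = a} = {}" using sub that by auto
    then show ?thesis by (metis sum.empty)
  qed
  have outB: "(\<Sum>d\<in>{d\<in>F. snd d = b}. c d) = 0" if "b \<notin> {1..J}" for b
  proof -
    have "{d\<in>F. snd d = b} = {}" using sub that by auto
    then show ?thesis by (metis sum.empty)
  qed
  show ?thesis
  proof
    assume H: "\<forall>cl < I + J - 1. (\<Sum>d\<in>F. design_row I J d cl * c d) = 0"
    have T0: "(\<Sum>d\<in>F. c d) = 0" using H[rule_format, of 0] I J by (simp add: rs0)
    have SA: "(\<Sum>d\<in>{d\<in>F. fst d = a}. c d) = 0" if "1 \<le> a" "a \<le> I - 1" for a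
      using H[rule_format, of a] rsA[OF fF that, of J c] that J by simp
    have SB: "(\<Sum>d\<in>{d\<in>F. snd d = b}. c d) = 0" if "1 \<le> b" "b \<le> J - 1" for b
    proof -
      have "(\<Sum>d\<in>F. design_row I J d (b + (I - 1)) * c d) = 0" using H[rule_format, of "b + (I - 1)"] that I by simp
      moreover have "(\<Sum>d\<in>F. design_row I J d (b + (I - 1)) * c d) = (\<Sum>d\<in>{d\<in>F. snd d = b}. c d)"
        using rsB[OF fF, of I "b + (I - 1)" J c] that I by simp
      ultimately show ?thesis by simp
    qed
    have "(\<Sum>a\<in>{1..I}. (\<Sum>d\<in>{d\<in>F. fst d = a}. c d)) = (\<Sum>d\<in>{d\<in>F. fst d = I}. c d) + (\<Sum>a\<in>{1..I}-{I}. (\<Sum>d\<in>{d\<in>F. fst d = a}. c d))"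
      using I by (intro sum.remove) auto
    also have "(\<Sum>a\<in>{1..I}-{I}. (\<Sum>d\<in>{d\<in>F. fst d = a}. c d)) = 0"
    proof (rule sum.neutral, rule ballI)
      fix x assume "x \<in> {1..I}-{I}"
      then have "1 \<le> x" "x \<le> I - 1" by auto
      then show "(\<Sum>d\<in>{d\<in>F. fst d = x}. c d) = 0" by (rule SA)
    qed
    finally have SAI: "(\<Sum>d\<in>{d\<in>F. fst d = I}. c d) = 0" using totA T0 by simp
    have "(\<Sum>b\<in>{1..J}. (\<Sum>d\<in>{d\<in>F. snd d = b}. c d)) = (\<Sum>d\<in>{d\<in>F. snd d = J}. c d) + (\<Sum>b\<in>{1..J}-{J}. (\<Sum>d\<in>{d\<in>F. snd d = b}. c d))"
      using J by (intro sum.remove) auto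
    also have "(\<Sum>b\<in>{1..J}-{J}. (\<Sum>d\<in>{d\<in>F. snd d = b}. c d)) = 0"
    proof (rule sum.neutral, rule ballI)
      fix x assume "x \<in> {1..J}-{J}"
      then have "1 \<le> x" "x \<le> J - 1" by auto
      then show "(\<Sum>d\<in>{d\<in>F. snd d = x}. c d) = 0" by (rule SB)
    qed
    finally have SBJ: "(\<Sum>d\<in>{d\<in>F. snd d = J}. c d) = 0" using totB T0 by simp
    have "(\<Sum>d\<in>{d\<in>F. fst d = a}. c d) = 0" for a
    proof (cases "a \<in> {1..I}")
      case True
      then show ?thesis using SA SAI by (cases "a = I") auto
    qed (rule outA)
    moreover have "(\<Sum>d\<in>{d\<in>F. snd d = b}. c d) = 0" for b
    proof (cases "b \<in> {1..J}")
      case True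
      then show ?thesis using SB SBJ by (cases "b = J") auto
    qed (rule outB)
    ultimately show "(\<forall>a. (\<Sum>d\<in>{d\<in>F. fst d = a}. c d) = 0) \<and> (\<forall>b. (\<Sum>d\<in>{d\<in>F. snd d = b}. c d) = 0)"
      by blast
  next
    assume H: "(\<forall>a. (\<Sum>d\<in>{d\<in>F. fst d = a}. c d) = 0) \<and> (\<forall>b. (\<Sum>d\<in>{d\<in>F. snd d = b}. c d) = 0)"
    show "\<forall>cl < I + J - 1. (\<Sum>d\<in>F. design_row I J d cl * c d) = 0"
    proof (intro allI impI)
      fix cl assume cl: "cl < I + J - 1"
      show "(\<Sum>d\<in>F. design_row I J d cl * c d) = 0"
      proof (cases "cl = 0")
        case True then show ?thesis using totA H by (simp add: rs0)
      next
        case False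
        show ?thesis
        proof (cases "cl \<le> I - 1")
          case True
          then show ?thesis using rsA[OF fF _ True, of J c] False H by simp
        next
          case F2: False
          then show ?thesis using rsB[OF fF, of I cl J c] cl H by simp
        qed
      qed
    qed
  qed
qed



lemma sum_nth_list:
  assumes "distinct L"
  shows "(\<Sum>k<length L. g (L!k)) = sum g (set L)"
  by (rule sum.reindex_bij_betw[OF bij_betw_nth[OF assms refl refl]])

lemma mv_comp:
  assumes "finite F" "v \<in> carrier_vec (card F)" "cl < I + J - 1"
  shows "(transpose_mat (design_matrix I J F) *\<^sub>v v) $ cl
         = (\<Sum>k<card F. design_row I J (sorted_list_of_set F ! k) cl * v $ k)"
  using assms
  by (simp add: design_matrix_def scalar_prod_def atLeast0LessThan)

lemma sat_iff:
  assumes sub: "F \<subseteq> {1..I} \<times> {1..J}" and I: "I \<ge> 1" and J: "J \<ge> 1" and cF: "card F = I + J - 1"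
  shows "det (design_matrix I J F) \<noteq> 0 \<longleftrightarrow> indep F"
proof -
  have fF: "finite F" using sub finite_subset by blast
  define n where "n = card F"
  define L where "L = sorted_list_of_set F"
  have dL: "distinct L" and sL: "set L = F" and lL: "length L = n"
    using fF by (auto simp: L_def n_def)
  define X where "X = design_matrix I J F"
  have Xc: "X \<in> carrier_mat n n" using cF by (simp add: X_def design_matrix_def n_def)
  have XT: "transpose_mat X \<in> carrier_mat n n" using Xc by simp
  have detT: "det (transpose_mat X) = det X" using det_transpose[OF Xc] .
  have conv: "(\<Sum>k<n. design_row I J (L!k) cl * c (L!k)) = (\<Sum>d\<in>F. design_row I J d cl * c d)" for cl c
    using sum_nth_list[OF dL, of "\<lambda>d. design_row I J d cl * c d"] sL lL by simp
  show ?thesis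
  proof
    assume dX: "det (design_matrix I J F) \<noteq> 0"
    show "indep F" unfolding indep_def
    proof (intro allI impI ballI)
      fix c :: "nat\<times>nat\<Rightarrow>real" and d
      assume E: "(\<forall>a. (\<Sum>d\<in>{d\<in>F. fst d = a}. c d) = 0) \<and> (\<forall>b. (\<Sum>d\<in>{d\<in>F. snd d = b}. c d) = 0)"
        and d: "d \<in> F"
      have R: "\<forall>cl < I + J - 1. (\<Sum>d\<in>F. design_row I J d cl * c d) = 0"
        using design_eqs[OF sub I J, of c] E by blast
      define v where "v = vec n (\<lambda>k. c (L!k))"
      have vc: "v \<in> carrier_vec n" by (simp add: v_def)
      have "transpose_mat X *\<^sub>v v = 0\<^sub>v n"
      proof (rule eq_vecI)
        show "dim_vec (transpose_mat X *\<^sub>v v) = dim_vec (0\<^sub>v n :: real vec)" using XT by simp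
      next
        fix cl assume "cl < dim_vec (0\<^sub>v n :: real vec)"
        then have cl: "cl < n" by simp
        have "(transpose_mat X *\<^sub>v v) $ cl = (\<Sum>k<n. design_row I J (L!k) cl * v $ k)"
          using mv_comp[OF fF, of v cl I J] vc cl cF unfolding X_def L_def n_def by simp
        also have "\<dots> = (\<Sum>k<n. design_row I J (L!k) cl * c (L!k))"
          by (rule sum.cong) (auto simp: v_def)
        also have "\<dots> = 0" using conv R cl cF n_def by simp
        finally show "(transpose_mat X *\<^sub>v v) $ cl = (0\<^sub>v n :: real vec) $ cl" using cl by simp
      qed
      then have "v = 0\<^sub>v n" using det_0_iff_vec_prod_zero[OF XT] detT dX vc X_def by metis
      moreover obtain k where k: "k < n" "d = L!k" using d sL lL by (metis in_set_conv_nth)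
      ultimately have "v $ k = 0" by simp
      then show "c d = 0" using k unfolding v_def by simp
    qed
  next
    assume ind: "indep F"
    show "det (design_matrix I J F) \<noteq> 0"
    proof
      assume "det (design_matrix I J F) = 0"
      then have "det (transpose_mat X) = 0" using detT X_def by simp
      then obtain v where vc: "v \<in> carrier_vec n" and v0: "v \<noteq> 0\<^sub>v n" and Xv: "transpose_mat X *\<^sub>v v = 0\<^sub>v n"
        using det_0_iff_vec_prod_zero[OF XT] by blast
      define c where "c = (\<lambda>d. v $ (the_inv_into {..<n} (nth L) d))"
      have inj: "inj_on (nth L) {..<n}" using dL lL by (simp add: inj_on_nth)
      have cL: "c (L!k) = v $ k" if "k < n" for k
        unfolding c_def using the_inv_into_f_f[OF inj] that by simp
      have R: "\<forall>cl < I + J - 1. (\<Sum>d\<in>F. design_row I J d cl * c d) = 0"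
      proof (intro allI impI)
        fix cl assume cl: "cl < I + J - 1"
        have "(\<Sum>d\<in>F. design_row I J d cl * c d) = (\<Sum>k<n. design_row I J (L!k) cl * c (L!k))"
          using conv by simp
        also have "\<dots> = (\<Sum>k<n. design_row I J (L!k) cl * v $ k)"
          by (rule sum.cong) (auto simp: cL)
        also have "\<dots> = (transpose_mat X *\<^sub>v v) $ cl"
          using mv_comp[OF fF, of v cl I J] vc cl cF unfolding X_def L_def n_def by simp
        also have "\<dots> = 0" using Xv cl cF n_def by simp
        finally show "(\<Sum>d\<in>F. design_row I J d cl * c d) = 0" .
      qed
      then have E: "(\<forall>a. (\<Sum>d\<in>{d\<in>F. fst d = a}. c d) = 0) \<and> (\<forall>b. (\<Sum>d\<in>{d\<in>F. snd d = b}. c d) = 0)"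
        using design_eqs[OF sub I J, of c] by blast
      have "v = 0\<^sub>v n"
      proof (rule eq_vecI)
        show "dim_vec v = dim_vec (0\<^sub>v n :: real vec)" using vc by simp
      next
        fix k assume "k < dim_vec (0\<^sub>v n :: real vec)"
        then have k: "k < n" by simp
        have "L!k \<in> F" using k sL lL by auto
        then have "c (L!k) = 0" using ind E unfolding indep_def by blast
        then show "v $ k = (0\<^sub>v n :: real vec) $ k" using cL[OF k] k by simp
      qed
      then show False using v0 by simp
    qed
  qed
qed



theorem proposition4p5:
  fixes I J :: nat and mA mB :: "nat \<Rightarrow> nat"
  assumes "I \<ge> 2" and "J \<ge> 2"
    and "\<forall>i\<in>{1..I}. mA i > 0" and "\<forall>j\<in>{1..J}. mB j > 0"
    and "(\<Sum>i=1..I. mA i) = I + J - 1" and "(\<Sum>j=1..J. mB j) = I + J - 1"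
  shows "card {F. F \<subseteq> {1..I} \<times> {1..J} \<and> saturated I J F
                \<and> (\<forall>i\<in>{1..I}. margin_A F i = mA i) \<and> (\<forall>j\<in>{1..J}. margin_B F j = mB j)}
         = multinomial (I - 1) (\<lambda>j. mB j - 1) {1..J} * multinomial (J - 1) (\<lambda>i. mA i - 1) {1..I}"
proof -
  have I1: "I \<ge> 1" and J1: "J \<ge> 1" using assms by auto
  have seteq: "{F. F \<subseteq> {1..I} \<times> {1..J} \<and> saturated I J F
                \<and> (\<forall>i\<in>{1..I}. margin_A F i = mA i) \<and> (\<forall>j\<in>{1..J}. margin_B F j = mB j)}
        = SS {1..I} {1..J} mA mB"
  proof (intro equalityI subsetI)
    fix F assume "F \<in> {F. F \<subseteq> {1..I} \<times> {1..J} \<and> saturated I J F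
                \<and> (\<forall>i\<in>{1..I}. margin_A F i = mA i) \<and> (\<forall>j\<in>{1..J}. margin_B F j = mB j)}"
    then have sub: "F \<subseteq> {1..I} \<times> {1..J}" and sat: "saturated I J F"
      and m: "(\<forall>i\<in>{1..I}. margin_A F i = mA i) \<and> (\<forall>j\<in>{1..J}. margin_B F j = mB j)" by auto
    have "indep F" using sat sat_iff[OF sub I1 J1] unfolding saturated_def by blast
    then show "F \<in> SS {1..I} {1..J} mA mB" unfolding SS_def using sub m by blast
  next
    fix F assume F: "F \<in> SS {1..I} {1..J} mA mB"
    then have sub: "F \<subseteq> {1..I} \<times> {1..J}" and ind: "indep F"
      and m: "(\<forall>i\<in>{1..I}. margin_A F i = mA i) \<and> (\<forall>j\<in>{1..J}. margin_B F j = mB j)"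
      unfolding SS_def by auto
    have "card F = (\<Sum>i\<in>{1..I}. margin_A F i)" by (rule card_by_margin_A[OF sub]) auto
    also have "\<dots> = (\<Sum>i\<in>{1..I}. mA i)" using m by simp
    finally have cF: "card F = I + J - 1" using assms(5) by simp
    have "saturated I J F" unfolding saturated_def using cF sat_iff[OF sub I1 J1 cF] ind by blast
    then show "F \<in> {F. F \<subseteq> {1..I} \<times> {1..J} \<and> saturated I J F
                \<and> (\<forall>i\<in>{1..I}. margin_A F i = mA i) \<and> (\<forall>j\<in>{1..J}. margin_B F j = mB j)}"
      using sub m by blast
  qed
  have h: "hyps {1..I} {1..J} mA mB" unfolding hyps_def using assms by auto
  have C: "card (SS {1..I} {1..J} mA mB) * (\<Prod>a\<in>{1..I}. fact (mA a - 1)) * (\<Prod>b\<in>{1..J}. fact (mB b - 1))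
       = (fact (I - 1) * fact (J - 1) :: nat)"
    using count_main[OF h] unfolding concl_def by simp
  define p where "p = (\<Prod>a\<in>{1..I}. fact (mA a - 1) :: nat)"
  define q where "q = (\<Prod>b\<in>{1..J}. fact (mB b - 1) :: nat)"
  have sq: "(\<Sum>b\<in>{1..J}. mB b - 1) = I - 1"
    using sum_minus_one[of "{1..J}" mB] assms by simp
  have sp: "(\<Sum>a\<in>{1..I}. mA a - 1) = J - 1"
    using sum_minus_one[of "{1..I}" mA] assms by simp
  have "q dvd fact (I - 1)" using prod_fact_dvd[of "{1..J}" "\<lambda>b. mB b - 1"] sq unfolding q_def by simp
  then obtain x where x: "fact (I - 1) = q * x" by blast
  have "p dvd fact (J - 1)" using prod_fact_dvd[of "{1..I}" "\<lambda>a. mA a - 1"] sp unfolding p_def by simp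
  then obtain y where y: "fact (J - 1) = p * y" by blast
  have p0: "p > 0" unfolding p_def by (simp add: prod_pos)
  have q0: "q > 0" unfolding q_def by (simp add: prod_pos)
  have m1: "multinomial (I - 1) (\<lambda>j. mB j - 1) {1..J} = x"
    unfolding multinomial_def using x q0 q_def by simp
  have m2: "multinomial (J - 1) (\<lambda>i. mA i - 1) {1..I} = y"
    unfolding multinomial_def using y p0 p_def by simp
  have "card (SS {1..I} {1..J} mA mB) * (p * q) = (x * y) * (p * q)"
    using C x y unfolding p_def q_def by (simp add: mult_ac)
  then have "card (SS {1..I} {1..J} mA mB) = x * y" using p0 q0 by simp
  then show ?thesis using seteq m1 m2 by simp
qed

end
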